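(* Let $0<p<1$ and let $G$ be a connected simple graph with $n$ vertices and $m$ edges. Then $$\min\left\{\mathcal{E}_p^+(G), \mathcal{E}_p^-(G)\right\} \geq (n-1)^{p/2}.$$
   Context: For a graph $G$ with adjacency eigenvalues $\lambda_1\ge\cdots\ge\lambda_n$ (with multiplicity), $\mathcal{E}_p^+(G) = \sum_{\lambda_i>0}\lambda_i^p$ and $\mathcal{E}_p^-(G) = \sum_{\lambda_i<0}|\lambda_i|^p$. *)

theory Defs
  imports "Jordan_Normal_Form.Char_Poly"
begin

definition simple_graph :: "nat \<Rightarrow> (nat \<Rightarrow> nat \<Rightarrow> bool) \<Rightarrow> bool" where
  "simple_graph n E \<longleftrightarrow> (\<forall>i<n. \<not> E i i) \<and> (\<forall>i<n. \<forall>j<n. E i j \<longleftrightarrow> E j i)"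

definition connected_graph :: "nat \<Rightarrow> (nat \<Rightarrow> nat \<Rightarrow> bool) \<Rightarrow> bool" where
  "connected_graph n E \<longleftrightarrow> (\<forall>i<n. \<forall>j<n. (\<lambda>x y. x < n \<and> y < n \<and> E x y)\<^sup>*\<^sup>* i j)"

definition num_edges :: "nat \<Rightarrow> (nat \<Rightarrow> nat \<Rightarrow> bool) \<Rightarrow> nat" where
  "num_edges n E = card {(i, j). i < j \<and> j < n \<and> E i j}"

definition adj_matrix :: "nat \<Rightarrow> (nat \<Rightarrow> nat \<Rightarrow> bool) \<Rightarrow> real mat" where
  "adj_matrix n E = mat n n (\<lambda>(i, j). if E i j then 1 else 0)"

text \<open>Eigenvalues counted with (algebraic) multiplicity = roots of the characteristic polynomial
  with their order; for the real symmetric adjacency matrix the char. polynomial splits over the reals.\<close>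
definition pos_p_energy :: "real \<Rightarrow> real mat \<Rightarrow> real" where
  "pos_p_energy p A = (\<Sum>x\<in>{x. poly (char_poly A) x = 0 \<and> x > 0}.
       real (order x (char_poly A)) * x powr p)"

definition neg_p_energy :: "real \<Rightarrow> real mat \<Rightarrow> real" where
  "neg_p_energy p A = (\<Sum>x\<in>{x. poly (char_poly A) x = 0 \<and> x < 0}.
       real (order x (char_poly A)) * \<bar>x\<bar> powr p)"

end

theory Submission
  imports Defs "Jordan_Normal_Form.Schur_Decomposition"
begin

definition tr :: "'a::comm_ring_1 mat \<Rightarrow> 'a" where "tr M = (\<Sum>i\<in>{0..<dim_row M}. M$$(i,i))"

lemma tr_comm: assumes X: "X \<in> carrier_mat n n" and Y: "Y \<in> carrier_mat n n"
  shows "tr (X * Y) = tr (Y * X)"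
proof -
  have "tr (X * Y) = (\<Sum>i\<in>{0..<n}. \<Sum>k\<in>{0..<n}. X$$(i,k) * Y$$(k,i))"
    unfolding tr_def using X Y by (auto simp: scalar_prod_def intro!: sum.cong)
  also have "\<dots> = (\<Sum>k\<in>{0..<n}. \<Sum>i\<in>{0..<n}. X$$(i,k) * Y$$(k,i))" by (rule sum.swap)
  also have "\<dots> = tr (Y * X)"
    unfolding tr_def using X Y by (auto simp: scalar_prod_def mult.commute intro!: sum.cong)
  finally show ?thesis .
qed

lemma tr_sim: assumes "similar_mat_wit A B P Q" shows "tr A = tr B"
proof -
  define n where "n = dim_row A"
  from similar_mat_witD[OF n_def assms] have
    A: "A \<in> carrier_mat n n" and B: "B \<in> carrier_mat n n" and P: "P \<in> carrier_mat n n" 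
    and Q: "Q \<in> carrier_mat n n"
    and QP: "Q * P = 1\<^sub>m n" and AB: "A = P * B * Q" by auto
  have "tr A = tr (P * (B * Q))" using AB A B P Q by (simp add: assoc_mult_mat[of _ n n _ n _ n])
  also have "\<dots> = tr ((B * Q) * P)" by (rule tr_comm[of _ n], insert B P Q, auto)
  also have "(B * Q) * P = B * (Q * P)" using B P Q by (simp add: assoc_mult_mat[of _ n n _ n _ n])
  also have "\<dots> = B" using QP B by simp
  finally show ?thesis .
qed

lemma tr_ut_sq: assumes B: "B \<in> carrier_mat n n" and ut: "upper_triangular B"
  shows "tr (B * B) = (\<Sum>i\<in>{0..<n}. (B$$(i,i))^2)"
proof -
  have "(B * B) $$ (i,i) = (B$$(i,i))^2" if i: "i < n" for i
  proof -
    have "(B * B) $$ (i,i) = (\<Sum>k\<in>{0..<n}. B$$(i,k) * B$$(k,i))"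
      using i B by (simp add: scalar_prod_def)
    also have "\<dots> = (\<Sum>k\<in>{0..<n}. if k = i then (B$$(i,i))^2 else 0)"
    proof (rule sum.cong)
      fix k assume k: "k \<in> {0..<n}"
      show "B$$(i,k) * B$$(k,i) = (if k = i then (B$$(i,i))^2 else 0)"
      proof (cases "k < i")
        case True then show ?thesis using upper_triangularD[OF ut True] i B by auto
      next
        case False
        show ?thesis
        proof (cases "k = i")
          case True then show ?thesis by (simp add: power2_eq_square)
        next
          case False': False
          with False have "i < k" by simp
          then show ?thesis using upper_triangularD[OF ut \<open>i < k\<close>] k B False' by auto
        qed
      qed
    qed simp
    also have "\<dots> = (B$$(i,i))^2" using i by simp
    finally show ?thesis .
  qed
  then show ?thesis unfolding tr_def using B by (auto intro!: sum.cong)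
qed

lemma spec_facts:
  fixes A :: "real mat"
  assumes A: "A \<in> carrier_mat n n" and cp: "char_poly A = (\<Prod>r\<leftarrow>rs. [:-r,1:])"
  shows "sum_list rs = tr A" "sum_list (map (\<lambda>x. x^2) rs) = tr (A * A)"
proof -
  obtain B P Q where sd: "schur_decomposition A rs = (B,P,Q)" by (cases "schur_decomposition A rs", auto)
  from schur_decomposition[OF A cp sd] have sim: "similar_mat_wit A B P Q"
    and ut: "upper_triangular B" and dg: "diag_mat B = rs" by auto
  from similar_mat_witD2[OF A sim] have B: "B \<in> carrier_mat n n" by auto
  have len: "length rs = n" using dg B by (auto simp: diag_mat_def)
  have rsi: "rs ! i = B$$(i,i)" if "i < n" for i using dg B that by (auto simp: diag_mat_def)
  have "sum_list rs = (\<Sum>i\<in>{0..<n}. rs ! i)" using len by (simp add: sum_list_sum_nth)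
  also have "\<dots> = tr B" unfolding tr_def using B rsi by auto
  also have "\<dots> = tr A" using tr_sim[OF sim] by simp
  finally show "sum_list rs = tr A" .
  have "sum_list (map (\<lambda>x. x^2) rs) = (\<Sum>i\<in>{0..<n}. (rs ! i)^2)" using len by (simp add: sum_list_sum_nth)
  also have "\<dots> = tr (B * B)" using tr_ut_sq[OF B ut] rsi by auto
  also have "\<dots> = tr (A * A)"
  proof -
    have "similar_mat_wit (A ^\<^sub>m 2) (B ^\<^sub>m 2) P Q" by (rule similar_mat_wit_pow[OF sim])
    moreover have "A ^\<^sub>m 2 = A * A" using A by (simp add: numeral_2_eq_2)
    moreover have "B ^\<^sub>m 2 = B * B" using B by (simp add: numeral_2_eq_2)
    ultimately show ?thesis using tr_sim by metis
  qed
  finally show "sum_list (map (\<lambda>x. x^2) rs) = tr (A * A)" .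
qed

lemma sym_real_eig:
  fixes A :: "real mat"
  assumes A: "A \<in> carrier_mat n n" and sym: "\<And>i j. i<n \<Longrightarrow> j<n \<Longrightarrow> A$$(i,j) = A$$(j,i)"
  and ev: "eigenvalue (map_mat complex_of_real A) a"
  shows "Im a = 0"
proof -
  let ?C = "map_mat complex_of_real A"
  obtain v where v: "v \<in> carrier_vec n" "v \<noteq> 0\<^sub>v n" "?C *\<^sub>v v = a \<cdot>\<^sub>v v"
    using ev A unfolding eigenvalue_def eigenvector_def by auto
  define s where "s = (\<Sum>i\<in>{0..<n}. cnj (v$i) * (\<Sum>j\<in>{0..<n}. complex_of_real (A$$(i,j)) * v$j))"
  define t where "t = (\<Sum>i\<in>{0..<n}. cnj (v$i) * v$i)"
  have row: "(\<Sum>j\<in>{0..<n}. complex_of_real (A$$(i,j)) * v$j) = a * v$i" if i: "i < n" for i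
  proof -
    have e1: "(?C *\<^sub>v v) $ i = (a \<cdot>\<^sub>v v) $ i" using v by simp
    have e2: "(?C *\<^sub>v v) $ i = (\<Sum>j\<in>{0..<n}. complex_of_real (A$$(i,j)) * v$j)"
      using i A v(1) by (simp add: scalar_prod_def)
    have e3: "(a \<cdot>\<^sub>v v) $ i = a * v$i" using i v by simp
    show ?thesis using e1 e2 e3 by simp
  qed
  have "s = (\<Sum>i\<in>{0..<n}. cnj (v$i) * (a * v$i))" unfolding s_def
    by (rule sum.cong) (auto simp: row)
  also have "\<dots> = a * t" unfolding t_def by (simp add: sum_distrib_left mult.assoc mult.left_commute)
  finally have st: "s = a * t" .
  have "cnj s = (\<Sum>i\<in>{0..<n}. (\<Sum>j\<in>{0..<n}. v$i * complex_of_real (A$$(i,j)) * cnj (v$j)))"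
    unfolding s_def by (simp add: sum_distrib_left algebra_simps)
  also have "\<dots> = (\<Sum>j\<in>{0..<n}. (\<Sum>i\<in>{0..<n}. v$i * complex_of_real (A$$(i,j)) * cnj (v$j)))"
    by (rule sum.swap)
  also have "\<dots> = s" unfolding s_def
    by (auto simp: sum_distrib_left algebra_simps sym intro!: sum.cong)
  finally have cs: "cnj s = s" .
  have ims: "Im s = 0" using arg_cong[OF cs, of Im] by simp
  have tre: "t = complex_of_real (\<Sum>i\<in>{0..<n}. (cmod (v$i))^2)"
    unfolding t_def of_real_sum by (rule sum.cong, simp, subst complex_norm_square, simp add: mult.commute)
  obtain k where k: "k < n" "v$k \<noteq> 0" using v by (metis eq_vecI carrier_vecD index_zero_vec(1,2))
  have "(cmod (v$k))^2 \<le> (\<Sum>i\<in>{0..<n}. (cmod (v$i))^2)"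
    by (rule member_le_sum) (use k in auto)
  moreover have "(cmod (v$k))^2 > 0" using k by simp
  ultimately have tpos: "(\<Sum>i\<in>{0..<n}. (cmod (v$i))^2) > 0" by linarith
  have "Im s = Im a * (\<Sum>i\<in>{0..<n}. (cmod (v$i))^2)" unfolding st tre by simp
  with ims tpos show ?thesis by simp
qed


lemma real_split:
  fixes A :: "real mat"
  assumes A: "A \<in> carrier_mat n n" and sym: "\<And>i j. i<n \<Longrightarrow> j<n \<Longrightarrow> A$$(i,j) = A$$(j,i)"
  shows "\<exists>rs. char_poly A = (\<Prod>r\<leftarrow>rs. [:-r,1:])"
proof -
  let ?C = "map_mat complex_of_real A"
  have C: "?C \<in> carrier_mat n n" using A by simp
  obtain as where as: "char_poly ?C = (\<Prod>a\<leftarrow>as. [:-a,1:])" using char_poly_factorized[OF C] by auto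
  have re: "Im a = 0" if a: "a \<in> set as" for a
  proof (rule sym_real_eig[OF A sym])
    have "poly (char_poly ?C) a = 0" unfolding as using a
      by (induction as) (auto simp: poly_prod_list)
    then show "eigenvalue ?C a" using eigenvalue_root_char_poly[OF C] by simp
  qed auto
  define rs where "rs = map Re as"
  have asr: "as = map complex_of_real rs" unfolding rs_def
    using re by (induction as) (auto simp: complex_eq_iff)
  interpret mp: map_poly_comm_ring_hom "complex_of_real" ..
  have hom: "map_poly complex_of_real (\<Prod>r\<leftarrow>rs. [:-r,1:]) = (\<Prod>r\<leftarrow>rs. [:-complex_of_real r,1:])"
  proof (induction rs)
    case (Cons r rs)
    have "map_poly complex_of_real ([:-r,1:] * (\<Prod>r\<leftarrow>rs. [:-r,1:])) = map_poly complex_of_real [:-r,1:] * map_poly complex_of_real (\<Prod>r\<leftarrow>rs. [:-r,1:])" by (rule mp.hom_mult)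
    moreover have "map_poly complex_of_real [:-r,1:] = [:-complex_of_real r,1:]" by simp
    ultimately show ?case using Cons by (simp only: list.map prod_list.Cons)
  qed simp
  have "map_poly complex_of_real (char_poly A) = char_poly ?C" by (rule of_real_hom.char_poly_hom[OF A, symmetric])
  also have "\<dots> = map_poly complex_of_real (\<Prod>r\<leftarrow>rs. [:-r,1:])" unfolding as hom asr by (simp add: o_def)
  finally have eq: "map_poly complex_of_real (char_poly A) = map_poly complex_of_real (\<Prod>r\<leftarrow>rs. [:-r,1:])" .
  have "char_poly A = (\<Prod>r\<leftarrow>rs. [:-r,1:])"
  proof (rule poly_eqI)
    fix i
    have "coeff (map_poly complex_of_real (char_poly A)) i = coeff (map_poly complex_of_real (\<Prod>r\<leftarrow>rs. [:-r,1:])) i"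
      using eq by simp
    then show "coeff (char_poly A) i = coeff (\<Prod>r\<leftarrow>rs. [:-r,1:]) i" by (simp add: coeff_map_poly)
  qed
  then show ?thesis by blast
qed

lemma member_le_sum_list_nonneg:
  fixes f :: "real \<Rightarrow> real"
  assumes "\<And>y. y \<in> set xs \<Longrightarrow> f y \<ge> 0" "x \<in> set xs"
  shows "f x \<le> sum_list (map f xs)"
  using assms
proof (induction xs)
  case (Cons a xs)
  show ?case
  proof (cases "x = a")
    case True
    have "0 \<le> sum_list (map f xs)" using Cons.prems(1) by (intro sum_list_nonneg) auto
    then show ?thesis using True by simp
  next
    case False
    then have "f x \<le> sum_list (map f xs)" using Cons by auto
    moreover have "f a \<ge> 0" using Cons.prems(1) by auto
    ultimately show ?thesis by simp
  qed
qed simp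

lemma one_side:
  fixes rs :: "real list" and p N :: real
  assumes s0: "sum_list rs = 0" and s2: "sum_list (map (\<lambda>x. x^2) rs) \<ge> 2 * N"
    and N0: "N \<ge> 0" and p0: "0 < p" and p1: "p < 1"
  shows "sum_list (map (\<lambda>x. if x > 0 then x powr p else 0) rs) \<ge> N powr (p/2)"
proof (cases "N = 0")
  case True
  have "0 \<le> sum_list (map (\<lambda>x. if x > 0 then x powr p else 0) rs)"
    by (intro sum_list_nonneg) auto
  then show ?thesis using True by simp
next
  case False
  with N0 have Npos: "N > 0" by simp
  define pos where "pos = (\<lambda>x::real. if x > 0 then x else 0)"
  define neg where "neg = (\<lambda>x::real. if x < 0 then -x else 0)"
  define S where "S = sum_list (map pos rs)"
  have "\<exists>x\<in>set rs. x \<noteq> 0"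
  proof (rule ccontr)
    assume "\<not> ?thesis"
    then have "sum_list (map (\<lambda>x. x^2) rs) = sum_list (map (\<lambda>x. 0) rs)"
      by (intro arg_cong[where f=sum_list] map_cong) auto
    then show False using s2 Npos by simp
  qed
  then obtain x0 where x0: "x0 \<in> set rs" "x0 \<noteq> 0" by blast
  define M where "M = Max (abs ` set rs)"
  have fin: "finite (abs ` set rs)" by simp
  have Mge: "\<bar>x\<bar> \<le> M" if "x \<in> set rs" for x unfolding M_def using fin that by (intro Max_ge) auto
  have "M \<in> abs ` set rs" unfolding M_def using x0 fin by (intro Max_in) auto
  then obtain r0 where r0: "r0 \<in> set rs" "\<bar>r0\<bar> = M" by blast
  have Mpos: "M > 0" using Mge[OF x0(1)] x0(2) by simp
  have negS: "sum_list (map neg rs) = S"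
  proof -
    have "sum_list (map (\<lambda>x. pos x - neg x) rs) = sum_list rs"
      by (intro arg_cong[where f=sum_list]) (auto simp: pos_def neg_def intro!: map_idI)
    then show ?thesis using s0 unfolding S_def by (simp add: sum_list_subtractf)
  qed
  have SM: "S \<ge> M"
  proof (cases "r0 > 0")
    case True
    have "pos r0 \<le> S" unfolding S_def by (rule member_le_sum_list_nonneg) (auto simp: pos_def r0)
    then show ?thesis using True r0 by (simp add: pos_def)
  next
    case False
    then have "r0 < 0" using r0 Mpos by auto
    have "neg r0 \<le> S" unfolding negS[symmetric] by (rule member_le_sum_list_nonneg) (auto simp: neg_def r0)
    then show ?thesis using \<open>r0 < 0\<close> r0 by (simp add: neg_def)
  qed
  have "2 * N \<le> sum_list (map (\<lambda>x. x^2) rs)" by (rule s2)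
  also have "\<dots> \<le> sum_list (map (\<lambda>x. M * pos x + M * neg x) rs)"
  proof (rule sum_list_mono)
    fix x assume x: "x \<in> set rs"
    have "x^2 = \<bar>x\<bar> * \<bar>x\<bar>" by (simp add: power2_eq_square)
    also have "\<dots> \<le> M * \<bar>x\<bar>" using Mge[OF x] by (intro mult_right_mono) auto
    also have "\<dots> = M * pos x + M * neg x" by (auto simp: pos_def neg_def)
    finally show "x^2 \<le> M * pos x + M * neg x" .
  qed
  also have "\<dots> = M * S + M * S"
    by (simp add: sum_list_addf sum_list_const_mult negS S_def)
  finally have NMS: "N \<le> M * S" by simp
  have "M powr (p - 1) * S = sum_list (map (\<lambda>x. M powr (p - 1) * pos x) rs)"
    unfolding S_def by (simp add: sum_list_const_mult)
  also have "\<dots> \<le> sum_list (map (\<lambda>x. if x > 0 then x powr p else 0) rs)"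
  proof (rule sum_list_mono)
    fix x assume x: "x \<in> set rs"
    show "M powr (p - 1) * pos x \<le> (if x > 0 then x powr p else 0)"
    proof (cases "x > 0")
      case True
      have xM: "x \<le> M" using Mge[OF x] by simp
      have "M powr (p - 1) \<le> x powr (p - 1)" by (rule powr_mono2') (use p1 True xM in auto)
      then have "M powr (p - 1) * x \<le> x powr (p - 1) * x" using True by (intro mult_right_mono) auto
      also have "x powr (p - 1) * x = x powr p" using True
        by (simp add: powr_mult_base mult.commute)
      finally show ?thesis using True by (simp add: pos_def)
    qed (simp add: pos_def)
  qed
  finally have main: "M powr (p - 1) * S \<le> sum_list (map (\<lambda>x. if x > 0 then x powr p else 0) rs)" .
  have M2': "M^2 = M powr 2" using Mpos by (metis of_nat_numeral powr_realpow)
  have M2: "(M^2) powr e = M powr (2 * e)" for e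
    unfolding M2' by (rule powr_powr)
  have "N powr (p/2) \<le> M powr (p - 1) * S"
  proof (cases "N \<le> M^2")
    case True
    have "N powr (p/2) \<le> (M^2) powr (p/2)" by (rule powr_mono2) (use True p0 N0 in auto)
    also have "\<dots> = M powr (p - 1) * M" using Mpos by (simp add: M2 powr_mult_base mult.commute)
    also have "\<dots> \<le> M powr (p - 1) * S" using SM by (intro mult_left_mono) auto
    finally show ?thesis .
  next
    case False
    have "N powr ((p - 2)/2) \<le> (M^2) powr ((p-2)/2)" 
      by (rule powr_mono2') (use False p1 Mpos in auto)
    also have "\<dots> = M powr (2 * ((p - 2)/2))" by (rule M2)
    also have "2 * ((p - 2)/2) = p - 2" by simp
    also have "M powr (p - 2) = M powr ((p - 1) - 1)" by simp
    also have "\<dots> = M powr (p - 1) / M powr 1" by (rule powr_diff)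
    also have "\<dots> = M powr (p - 1) / M" using Mpos by simp
    finally have h: "N powr ((p - 2)/2) \<le> M powr (p - 1) / M" .
    have "N powr (p/2) = N * N powr ((p - 2)/2)" using Npos
      by (simp add: powr_mult_base diff_divide_distrib)
    also have "\<dots> \<le> N * (M powr (p - 1) / M)" using h Npos by (intro mult_left_mono) auto
    also have "\<dots> = M powr (p - 1) * (N / M)" by simp
    also have "\<dots> \<le> M powr (p - 1) * S" using NMS Mpos
      by (intro mult_left_mono) (auto simp: divide_le_eq mult.commute)
    finally show ?thesis .
  qed
  with main show ?thesis by linarith
qed

lemma cut_edge:
  assumes conn: "connected_graph n E" and S: "S \<subseteq> {0..<n}" "0 \<in> S" and w: "w < n" "w \<notin> S"
  shows "\<exists>u v. u \<in> S \<and> v < n \<and> v \<notin> S \<and> E u v"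
proof -
  let ?R = "\<lambda>x y. x < n \<and> y < n \<and> E x y"
  have "0 < n" using w by simp
  then have r: "?R\<^sup>*\<^sup>* 0 w" using conn w unfolding connected_graph_def by blast
  have "\<And>y. ?R\<^sup>*\<^sup>* 0 y \<Longrightarrow> y \<notin> S \<Longrightarrow> \<exists>u v. u \<in> S \<and> v < n \<and> v \<notin> S \<and> E u v"
  proof -
    fix y assume "?R\<^sup>*\<^sup>* 0 y" "y \<notin> S"
    then show "\<exists>u v. u \<in> S \<and> v < n \<and> v \<notin> S \<and> E u v"
    proof (induction rule: rtranclp_induct)
      case base then show ?case using S by simp
    next
      case (step y z)
      show ?case
      proof (cases "y \<in> S")
        case True then show ?thesis using step by blast
      next
        case False then show ?thesis using step by blast
      qed
    qed
  qed
  then show ?thesis using r w by blast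
qed

definition edges_in :: "(nat \<Rightarrow> nat \<Rightarrow> bool) \<Rightarrow> nat set \<Rightarrow> (nat \<times> nat) set" where
  "edges_in E S = {(i, j). i < j \<and> i \<in> S \<and> j \<in> S \<and> E i j}"

lemma edges_in_finite: "finite S \<Longrightarrow> finite (edges_in E S)"
  by (rule finite_subset[of _ "S \<times> S"]) (auto simp: edges_in_def)

lemma grow:
  assumes sg: "simple_graph n E" and conn: "connected_graph n E" and k: "1 \<le> k" "k \<le> n"
  shows "\<exists>S. S \<subseteq> {0..<n} \<and> 0 \<in> S \<and> card S = k \<and> card (edges_in E S) \<ge> k - 1"
  using k
proof (induction k)
  case 0 then show ?case by simp
next
  case (Suc k)
  show ?case
  proof (cases "k = 0")
    case True
    show ?thesis by (rule exI[of _ "{0}"]) (use Suc.prems True in auto)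
  next
    case False
  then obtain S where S: "S \<subseteq> {0..<n}" "0 \<in> S" "card S = k" "card (edges_in E S) \<ge> k - 1"
    using Suc by auto
  have finS: "finite S" using S(1) finite_subset by blast
  have "S \<noteq> {0..<n}" using S(3) Suc.prems by auto
  then have "\<exists>w\<in>{0..<n}. w \<notin> S" using S(1) by blast
  then obtain w where w: "w < n" "w \<notin> S" by auto
  obtain u v where uv: "u \<in> S" "v < n" "v \<notin> S" "E u v" using cut_edge[OF conn S(1,2) w] by blast
  have un: "u < n" using uv S(1) by auto
  define e where "e = (min u v, max u v)"
  have uv_ne: "u \<noteq> v" using uv by auto
  have Evu: "E v u" using sg uv un unfolding simple_graph_def by blast
  let ?S' = "insert v S"
  have e_in: "e \<in> edges_in E ?S'" unfolding e_def edges_in_def using uv uv_ne Evu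
    by (auto simp: min_def max_def)
  have e_out: "e \<notin> edges_in E S" unfolding e_def edges_in_def using uv
    by (auto simp: min_def max_def)
  have sub: "insert e (edges_in E S) \<subseteq> edges_in E ?S'" using e_in by (auto simp: edges_in_def)
  have c: "card (edges_in E S) + 1 \<le> card (edges_in E ?S')"
    using card_mono[OF edges_in_finite[of ?S'] sub] finS e_out edges_in_finite[OF finS] by simp
  show ?thesis
    by (rule exI[of _ ?S']) (use S uv finS c False in auto)
  qed
qed

lemma edges_lower:
  assumes sg: "simple_graph n E" and conn: "connected_graph n E" and n: "n \<ge> 1"
  shows "num_edges n E \<ge> n - 1"
proof -
  obtain S where S: "S \<subseteq> {0..<n}" "card (edges_in E S) \<ge> n - 1"
    using grow[OF sg conn n le_refl] by blast
  have "edges_in E S \<subseteq> {(i, j). i < j \<and> j < n \<and> E i j}" using S(1) by (auto simp: edges_in_def)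
  moreover have "finite {(i, j). i < j \<and> j < n \<and> E i j}"
    by (rule finite_subset[of _ "{0..<n} \<times> {0..<n}"]) auto
  ultimately have "card (edges_in E S) \<le> num_edges n E" unfolding num_edges_def by (rule card_mono[rotated])
  with S show ?thesis by simp
qed

lemma sum_list_count_real:
  "sum_list (map f xs) = (\<Sum>x\<in>set xs. real (count_list xs x) * (f x :: real))"
proof (induction xs)
  case (Cons a xs)
  show ?case
  proof (cases "a \<in> set xs")
    case True
    have "sum_list (map f (a # xs)) = f a + (\<Sum>x\<in>set xs. real (count_list xs x) * f x)"
      by (simp add: Cons.IH)
    also have "set xs = insert a (set xs - {a})" using True by blast
    also have "f a + (\<Sum>x\<in>insert a (set xs - {a}). real (count_list xs x) * f x)
       = (\<Sum>x\<in>set (a # xs). real (count_list (a # xs) x) * f x)"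
      using True by (auto simp: sum.insert_remove algebra_simps insert_absorb sum.remove[of "set xs" a] split: if_splits intro!: sum.cong)
    finally show ?thesis .
  next
    case False
    then have "\<And>y. y \<in> set xs \<Longrightarrow> a \<noteq> y" by blast
    then show ?thesis using False by (simp add: Cons.IH)
  qed
qed simp

lemma prod_lin_nz: "(\<Prod>r\<leftarrow>rs. [:-r,1:]) \<noteq> (0::real poly)"
  by (subst prod_list_zero_iff) auto

lemma order_prod_lin: "Polynomial.order (x::real) (\<Prod>r\<leftarrow>rs. [:-r,1:]) = count_list rs x"
proof (induction rs)
  case (Cons r rs)
  define P where "P = (\<Prod>r\<leftarrow>rs. [:-r,1:])"
  have nz: "P \<noteq> 0" unfolding P_def by (rule prod_lin_nz)
  have nz2: "[:-r,1:] * P \<noteq> 0" using nz by (metis mult_eq_0_iff pCons_eq_0_iff zero_neq_one)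
  have "Polynomial.order x ([:-r,1:] * P) = Polynomial.order x [:-r,1:] + Polynomial.order x P"
    by (rule order_mult[OF nz2])
  moreover have "Polynomial.order x [:-r,1:] = (if x = r then 1 else 0)"
  proof (cases "x = r")
    case True then show ?thesis using order_power_n_n[of r 1] by simp
  next
    case False then show ?thesis using order_0I[of "[:-r,1:]" x] by simp
  qed
  moreover have "(\<Prod>r\<leftarrow>(r#rs). [:-r,1:]) = [:-r,1:] * P" unfolding P_def by simp
  ultimately show ?case using Cons unfolding P_def by simp
qed simp

lemma root_iff: "poly (\<Prod>r\<leftarrow>rs. [:-r,1:]) (x::real) = 0 \<longleftrightarrow> x \<in> set rs"
  using order_root[of "\<Prod>r\<leftarrow>rs. [:-r,1:]" x] prod_lin_nz[of rs]
  by (simp add: order_prod_lin count_list_0_iff)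

lemma energy_conv:
  fixes A :: "real mat"
  assumes cp: "char_poly A = (\<Prod>r\<leftarrow>rs. [:-r,1:])"
  shows "pos_p_energy p A = sum_list (map (\<lambda>x. if x > 0 then x powr p else 0) rs)"
    "neg_p_energy p A = sum_list (map (\<lambda>x. if x > 0 then x powr p else 0) (map uminus rs))"
proof -
  have s1: "{x. poly (char_poly A) x = 0 \<and> x > 0} = {x\<in>set rs. x > 0}"
    unfolding cp root_iff by auto
  have "sum_list (map (\<lambda>x. if x > 0 then x powr p else 0) rs) = 
    (\<Sum>x\<in>set rs. real (count_list rs x) * (if x > 0 then x powr p else 0))"
    by (rule sum_list_count_real)
  also have "\<dots> = (\<Sum>x\<in>{x\<in>set rs. x > 0}. real (count_list rs x) * x powr p)"
    by (subst sum.inter_filter) (auto intro!: sum.cong)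
  finally show "pos_p_energy p A = sum_list (map (\<lambda>x. if x > 0 then x powr p else 0) rs)"
    unfolding pos_p_energy_def s1 unfolding cp order_prod_lin by simp
  have s2: "{x. poly (char_poly A) x = 0 \<and> x < 0} = {x\<in>set rs. x < 0}"
    unfolding cp root_iff by auto
  have "sum_list (map (\<lambda>x. if x > 0 then x powr p else 0) (map uminus rs)) = 
     sum_list (map (\<lambda>x. if x < 0 then \<bar>x\<bar> powr p else 0) rs)"
    by (induction rs) auto
  also have "\<dots> = (\<Sum>x\<in>set rs. real (count_list rs x) * (if x < 0 then \<bar>x\<bar> powr p else 0))"
    by (rule sum_list_count_real)
  also have "\<dots> = (\<Sum>x\<in>{x\<in>set rs. x < 0}. real (count_list rs x) * \<bar>x\<bar> powr p)"
    by (subst sum.inter_filter) (auto intro!: sum.cong)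
  finally show "neg_p_energy p A = sum_list (map (\<lambda>x. if x > 0 then x powr p else 0) (map uminus rs))"
    unfolding neg_p_energy_def s2 unfolding cp order_prod_lin by simp
qed

lemma adj_tr:
  assumes sg: "simple_graph n E"
  shows "tr (adj_matrix n E) = 0" "tr (adj_matrix n E * adj_matrix n E) = 2 * real (num_edges n E)"
proof -
  let ?A = "adj_matrix n E"
  have irr: "\<And>i. i < n \<Longrightarrow> \<not> E i i" and sy: "\<And>i j. i < n \<Longrightarrow> j < n \<Longrightarrow> E i j = E j i"
    using sg unfolding simple_graph_def by auto
  show "tr ?A = 0" unfolding tr_def adj_matrix_def using irr by simp
  define L where "L = {(i, j). i < j \<and> j < n \<and> E i j}"
  define D where "D = {(i, j). i < n \<and> j < n \<and> E i j}"
  have finL: "finite L" unfolding L_def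
    by (rule finite_subset[of _ "{0..<n} \<times> {0..<n}"]) auto
  have D: "D = L \<union> prod.swap ` L" unfolding D_def L_def using irr sy
    by (auto simp: image_def) (metis linorder_neqE_nat)+
  have disj: "L \<inter> prod.swap ` L = {}" unfolding L_def by auto
  have cD: "card D = 2 * card L" unfolding D
    by (subst card_Un_disjoint) (use finL disj in \<open>auto simp: card_image\<close>)
  have "tr (?A * ?A) = (\<Sum>i\<in>{0..<n}. \<Sum>k\<in>{0..<n}. if E i k then 1 else 0)"
    unfolding tr_def adj_matrix_def
    by (auto simp: scalar_prod_def sy intro!: sum.cong)
  also have "\<dots> = (\<Sum>q\<in>{0..<n} \<times> {0..<n}. if E (fst q) (snd q) then 1 else 0)"
    by (simp add: sum.cartesian_product case_prod_beta)
  also have "\<dots> = real (card D)"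
  proof -
    have "D = {q \<in> {0..<n} \<times> {0..<n}. E (fst q) (snd q)}" unfolding D_def by auto
    then show ?thesis by (simp add: sum.If_cases Int_def)
  qed
  finally show "tr (?A * ?A) = 2 * real (num_edges n E)"
    unfolding num_edges_def L_def[symmetric] cD by simp
qed


theorem theorem5p7:
  fixes p :: real and n m :: nat and E :: "nat \<Rightarrow> nat \<Rightarrow> bool"
  assumes "0 < p" "p < 1"
    and "n \<ge> 1"
    and "simple_graph n E" "connected_graph n E"
    and "m = num_edges n E"
  shows "min (pos_p_energy p (adj_matrix n E)) (neg_p_energy p (adj_matrix n E))
           \<ge> (real n - 1) powr (p / 2)"
proof -
  let ?A = "adj_matrix n E"
  have A: "?A \<in> carrier_mat n n" unfolding adj_matrix_def by simp
  have sy: "?A $$ (i,j) = ?A $$ (j,i)" if "i < n" "j < n" for i j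
    using assms(4) that unfolding simple_graph_def adj_matrix_def by auto
  obtain rs where cp: "char_poly ?A = (\<Prod>r\<leftarrow>rs. [:-r,1:])" using real_split[OF A sy] by blast
  have s0: "sum_list rs = 0" using spec_facts(1)[OF A cp] adj_tr(1)[OF assms(4)] by simp
  have s2: "sum_list (map (\<lambda>x. x^2) rs) = 2 * real (num_edges n E)"
    using spec_facts(2)[OF A cp] adj_tr(2)[OF assms(4)] by simp
  have me: "num_edges n E \<ge> n - 1" by (rule edges_lower[OF assms(4,5,3)])
  have N: "real n - 1 \<le> real (num_edges n E)" using me assms(3) by linarith
  have N0: "real n - 1 \<ge> 0" using assms(3) by simp
  have pos: "pos_p_energy p ?A \<ge> (real n - 1) powr (p / 2)"
    unfolding energy_conv(1)[OF cp]
    by (rule one_side[OF s0 _ N0 assms(1,2)]) (use s2 N in simp)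
  have "sum_list (map uminus rs) = - sum_list rs" by (induction rs) auto
  then have s0': "sum_list (map uminus rs) = 0" using s0 by simp
  have s2': "sum_list (map (\<lambda>x. x^2) (map uminus rs)) = 2 * real (num_edges n E)"
    using s2 by (simp add: o_def)
  have neg: "neg_p_energy p ?A \<ge> (real n - 1) powr (p / 2)"
    unfolding energy_conv(2)[OF cp]
    by (rule one_side[OF s0' _ N0 assms(1,2)]) (use s2' N in simp)
  show ?thesis using pos neg by simp
qed

end
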